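(* Let $p>r\geq2$ and let $A$ be a symmetric nonnegative $r$-matrix of order $n$ with no zero slices. If $\mathbf{x}\in\mathbb{R}^n$ is a nonnegative vector with $|\mathbf{x}|_p=1$ and $P_A(\mathbf{x})=\lambda^{(p)}(A)$, then $\mathbf{x}$ is positive.
   Context: A cubical $r$-matrix of order $n$ is a function $A$ on $[n]^r$ with entries $a_{i_1,\ldots,i_r}$; symmetric means invariant under permutations of indices. A slice of $A$ is the $(r-1)$-matrix obtained by fixing one index $i_k=s$; a zero slice is one all of whose entries are $0$. $P_A(\mathbf{x})=\sum a_{i_1,\ldots,i_r}x_{i_1}\cdots x_{i_r}$ and $\lambda^{(p)}(A)=\max\{P_A(\mathbf{x}):\mathbf{x}\in\mathbb{R}^n,\ |\mathbf{x}|_p=1\}$. *)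

theory Defs
  imports Complex_Main "HOL-Library.Multiset"
begin

text \<open>A cubical r-matrix of order n is a real function on index tuples; an index
tuple is a list of length r with entries in {0..<n} (indices are 0-based).
Vectors in R^n are functions nat => real, only coordinates below n matter.\<close>

definition idx :: "nat \<Rightarrow> nat \<Rightarrow> nat list set" where
  "idx r n = {is. length is = r \<and> set is \<subseteq> {..<n}}"

definition sym_matrix :: "nat \<Rightarrow> nat \<Rightarrow> (nat list \<Rightarrow> real) \<Rightarrow> bool" where
  "sym_matrix r n A \<longleftrightarrow>
     (\<forall>is\<in>idx r n. \<forall>js. mset js = mset is \<longrightarrow> A js = A is)"

definition nonneg_matrix :: "nat \<Rightarrow> nat \<Rightarrow> (nat list \<Rightarrow> real) \<Rightarrow> bool" where
  "nonneg_matrix r n A \<longleftrightarrow> (\<forall>is\<in>idx r n. 0 \<le> A is)"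

definition zero_slice :: "nat \<Rightarrow> nat \<Rightarrow> (nat list \<Rightarrow> real) \<Rightarrow> nat \<Rightarrow> nat \<Rightarrow> bool" where
  "zero_slice r n A k s \<longleftrightarrow> (\<forall>is\<in>idx r n. is ! k = s \<longrightarrow> A is = 0)"

definition no_zero_slices :: "nat \<Rightarrow> nat \<Rightarrow> (nat list \<Rightarrow> real) \<Rightarrow> bool" where
  "no_zero_slices r n A \<longleftrightarrow> (\<forall>k<r. \<forall>s<n. \<not> zero_slice r n A k s)"

definition polyform :: "nat \<Rightarrow> nat \<Rightarrow> (nat list \<Rightarrow> real) \<Rightarrow> (nat \<Rightarrow> real) \<Rightarrow> real" where
  "polyform r n A x = (\<Sum>is\<in>idx r n. A is * prod_list (map x is))"

definition pnorm :: "nat \<Rightarrow> real \<Rightarrow> (nat \<Rightarrow> real) \<Rightarrow> real" where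
  "pnorm n p x = (\<Sum>i<n. \<bar>x i\<bar> powr p) powr (1 / p)"

definition lambda_p :: "nat \<Rightarrow> nat \<Rightarrow> real \<Rightarrow> (nat list \<Rightarrow> real) \<Rightarrow> real" where
  "lambda_p r n p A = (SUP x\<in>{x. pnorm n p x = 1}. polyform r n A x)"

end

theory Submission
  imports Defs
begin

lemma finite_idx: "finite (idx r n)"
proof -
  have "idx r n = {xs. set xs \<subseteq> {..<n} \<and> length xs = r}" by (auto simp: idx_def)
  thus ?thesis using finite_lists_length_eq[of "{..<n}" r] by simp
qed

lemma prod_list_div: "prod_list (map (\<lambda>j. y j / (c::real)) xs) = prod_list (map y xs) / c ^ length xs"
  by (induction xs) auto

lemma prod_list_mono: "(\<forall>j\<in>set xs. 0 \<le> f j \<and> f j \<le> (g j::real)) \<Longrightarrow> prod_list (map f xs) \<le> prod_list (map g xs)"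
proof (induction xs)
  case (Cons a xs)
  have "0 \<le> prod_list (map f xs)" using Cons.prems by (intro prod_list_nonneg) auto
  then show ?case using Cons by (simp add: mult_mono)
qed simp

lemma prod_list_lower: "0 \<le> (d::real) \<Longrightarrow> (\<forall>j\<in>set xs. d \<le> g j) \<Longrightarrow> d ^ length xs \<le> prod_list (map g xs)"
proof (induction xs)
  case (Cons a xs)
  then show ?case by (simp add: mult_mono)
qed simp

lemma prod_list_abs_le1: "(\<forall>j\<in>set xs. \<bar>g j\<bar> \<le> (1::real)) \<Longrightarrow> \<bar>prod_list (map g xs)\<bar> \<le> 1"
proof (induction xs)
  case (Cons a xs)
  then show ?case by (simp add: abs_mult mult_le_one)
qed simp

lemma pnorm_sum: assumes "0 < p" "pnorm n p x = 1" shows "(\<Sum>i<n. \<bar>x i\<bar> powr p) = 1"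
proof -
  let ?S = "(\<Sum>i<n. \<bar>x i\<bar> powr p)"
  have "?S \<ge> 0" by (simp add: sum_nonneg)
  have "(?S powr (1/p)) powr p = ?S"
    using assms \<open>?S \<ge> 0\<close> by (simp add: powr_powr)
  thus ?thesis using assms by (simp add: pnorm_def)
qed

lemma pnorm_coord: assumes "0 < p" "pnorm n p x = 1" "i < n" shows "\<bar>x i\<bar> \<le> 1"
proof -
  have "\<bar>x i\<bar> powr p \<le> (\<Sum>i<n. \<bar>x i\<bar> powr p)"
    by (rule member_le_sum) (use assms in auto)
  hence "\<bar>x i\<bar> powr p \<le> 1" using pnorm_sum[OF assms(1,2)] by simp
  show ?thesis
  proof (rule ccontr)
    assume "\<not> \<bar>x i\<bar> \<le> 1"
    hence "1 powr p < \<bar>x i\<bar> powr p" using assms(1) by (intro powr_less_mono2) auto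
    thus False using \<open>\<bar>x i\<bar> powr p \<le> 1\<close> by simp
  qed
qed

lemma bdd: assumes "0 < p" shows "bdd_above ((\<lambda>x. polyform r n A x) ` {x. pnorm n p x = 1})"
proof (rule bdd_aboveI2)
  fix x assume "x \<in> {x. pnorm n p x = 1}"
  hence h: "\<forall>i<n. \<bar>x i\<bar> \<le> 1" using pnorm_coord assms by auto
  have "polyform r n A x \<le> (\<Sum>is\<in>idx r n. \<bar>A is\<bar>)"
    unfolding polyform_def
  proof (rule sum_mono)
    fix "is" assume "is \<in> idx r n"
    hence "\<bar>prod_list (map x is)\<bar> \<le> 1" using h by (intro prod_list_abs_le1) (auto simp: idx_def)
    hence "\<bar>A is * prod_list (map x is)\<bar> \<le> \<bar>A is\<bar>"
      by (simp add: abs_mult mult_left_le)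
    thus "A is * prod_list (map x is) \<le> \<bar>A is\<bar>" by simp
  qed
  thus "polyform r n A x \<le> (\<Sum>is\<in>idx r n. \<bar>A is\<bar>)" .
qed

theorem corollary12:
  fixes r n :: nat and p :: real and A :: "nat list \<Rightarrow> real" and x :: "nat \<Rightarrow> real"
  assumes "2 \<le> r" and "real r < p"
    and "sym_matrix r n A" and "nonneg_matrix r n A" and "no_zero_slices r n A"
    and "\<forall>i<n. 0 \<le> x i" and "pnorm n p x = 1"
    and "polyform r n A x = lambda_p r n p A"
  shows "\<forall>i<n. 0 < x i"
proof (rule ccontr)
  assume "\<not> (\<forall>i<n. 0 < x i)"
  then obtain s where s: "s < n" "x s = 0" using assms(6) by force
  have p0: "0 < p" using assms(1,2) by linarith
  have xnn: "\<And>is. is \<in> idx r n \<Longrightarrow> \<forall>j\<in>set is. 0 \<le> x j"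
    using assms(6) by (auto simp: idx_def)
  have Ann: "\<And>is. is \<in> idx r n \<Longrightarrow> 0 \<le> A is" using assms(4) by (auto simp: nonneg_matrix_def)
  define P0 where "P0 = polyform r n A x"
  have P0nn: "0 \<le> P0" unfolding P0_def polyform_def
    by (intro sum_nonneg mult_nonneg_nonneg Ann prod_list_nonneg) (use xnn in auto)
  have "0 < r" using assms(1) by simp
  then obtain is0 where is0: "is0 \<in> idx r n" "is0 ! 0 = s" "A is0 \<noteq> 0"
    using assms(5) s(1) by (auto simp: no_zero_slices_def zero_slice_def)
  have a0: "0 < A is0" using Ann[OF is0(1)] is0(3) by simp
  have "s \<in> set is0" using is0 \<open>0 < r\<close> by (auto simp: idx_def)
  define b where "b = Min (insert 1 (x ` {j. j<n \<and> 0 < x j}))"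
  have bfin: "finite (insert 1 (x ` {j. j<n \<and> 0 < x j}))" by simp
  have b0: "0 < b" unfolding b_def using bfin by (subst Min_gr_iff) auto
  have b1: "b \<le> 1" unfolding b_def using bfin by (intro Min_le) auto
  have bx: "\<And>j. j < n \<Longrightarrow> 0 < x j \<Longrightarrow> b \<le> x j" unfolding b_def using bfin by (intro Min_le) auto
  define a where "a = A is0 * b ^ r"
  have a_pos: "0 < a" using a0 b0 by (simp add: a_def)
  define e where "e = a / (P0 * real n + 1)"
  have Pn: "0 \<le> P0 * real n" using P0nn by simp
  have e0: "0 < e" unfolding e_def using a_pos Pn by (intro divide_pos_pos) auto
  define t where "t = min 1 ((e/2) powr (1/(p - r)))"
  have t0: "0 < t" and t1: "t \<le> 1" using e0 by (auto simp: t_def)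
  have pr: "0 < p - r" using assms(2) by simp
  have tpe: "t powr (p - r) \<le> e / 2"
  proof -
    have "t powr (p - r) \<le> ((e/2) powr (1/(p - r))) powr (p - r)"
      using t0 pr by (intro powr_mono2) (auto simp: t_def)
    also have "\<dots> = e / 2" using pr e0 by (simp add: powr_powr)
    finally show ?thesis .
  qed
  define y where "y = (\<lambda>j. if x j = 0 then t else x j)"
  have ynn: "\<And>j. j < n \<Longrightarrow> x j \<le> y j \<and> 0 \<le> x j"
    using assms(6) t0 by (auto simp: y_def)
  have Py: "P0 + a * t ^ r \<le> polyform r n A y"
  proof -
    define f where "f = (\<lambda>is. A is * prod_list (map y is) - A is * prod_list (map x is))"
    have fnn: "\<And>is. is \<in> idx r n \<Longrightarrow> 0 \<le> f is"
    proof -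
      fix "is" assume h: "is \<in> idx r n"
      have "prod_list (map x is) \<le> prod_list (map y is)"
        using h ynn by (intro prod_list_mono) (auto simp: idx_def)
      thus "0 \<le> f is" unfolding f_def using Ann[OF h]
        by (simp add: mult_left_mono)
    qed
    have "prod_list (map x is0) = 0" using \<open>s \<in> set is0\<close> s(2)
      by (simp add: prod_list_zero_iff)
    moreover have "(t * b) ^ length is0 \<le> prod_list (map y is0)"
    proof (rule prod_list_lower)
      show "0 \<le> t * b" using t0 b0 by simp
      show "\<forall>j\<in>set is0. t * b \<le> y j"
      proof
        fix j assume "j \<in> set is0"
        hence jn: "j < n" using is0(1) by (auto simp: idx_def)
        show "t * b \<le> y j"
        proof (cases "x j = 0")
          case True thus ?thesis using t0 b1 by (simp add: y_def mult_left_le)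
        next
          case False
          hence "0 < x j" using assms(6) jn by force
          hence "b \<le> x j" using bx jn by simp
          thus ?thesis using False t1 b0 by (simp add: y_def) (metis mult_left_le_one_le less_imp_le order_trans t0)
        qed
      qed
    qed
    ultimately have "a * t ^ r \<le> f is0" using is0(1) a0
      by (simp add: f_def a_def idx_def power_mult_distrib mult_ac mult_left_mono)
    also have "\<dots> \<le> sum f (idx r n)"
      by (rule member_le_sum) (use is0(1) fnn finite_idx in auto)
    also have "\<dots> = polyform r n A y - P0"
      by (simp add: f_def P0_def polyform_def sum_subtractf)
    finally show ?thesis by simp
  qed
  define S where "S = (\<Sum>i<n. \<bar>y i\<bar> powr p)"
  have sx: "(\<Sum>i<n. \<bar>x i\<bar> powr p) = 1" using pnorm_sum[OF p0 assms(7)] .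
  have S1: "1 \<le> S"
  proof -
    have "(\<Sum>i<n. \<bar>x i\<bar> powr p) \<le> S" unfolding S_def
      using ynn p0 by (intro sum_mono powr_mono2) (auto, metis abs_ge_self order_trans)
    thus ?thesis using sx by simp
  qed
  have S2: "S \<le> 1 + real n * t powr p"
  proof -
    have "S \<le> (\<Sum>i<n. \<bar>x i\<bar> powr p + t powr p)" unfolding S_def
      by (intro sum_mono) (use t0 in \<open>auto simp: y_def\<close>)
    thus ?thesis using sx by (simp add: sum.distrib)
  qed
  define c where "c = S powr (1/p)"
  have c0: "0 < c" using S1 by (simp add: c_def)
  define z where "z = (\<lambda>j. y j / c)"
  have pz: "pnorm n p z = 1"
  proof -
    have "(\<Sum>i<n. \<bar>z i\<bar> powr p) = (\<Sum>i<n. \<bar>y i\<bar> powr p / c powr p)"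
      using c0 by (intro sum.cong) (auto simp: z_def abs_divide powr_divide)
    also have "\<dots> = S / c powr p" by (simp add: S_def sum_divide_distrib)
    also have "c powr p = S" using S1 p0 by (simp add: c_def powr_powr)
    finally show ?thesis using S1 by (simp add: pnorm_def)
  qed
  have Pz: "polyform r n A z = polyform r n A y / c ^ r"
    unfolding polyform_def z_def
    by (simp add: prod_list_div sum_divide_distrib idx_def)
  have cr: "c ^ r \<le> S"
  proof -
    have "c ^ r = S powr (r / p)" using S1 by (simp add: c_def powr_realpow[symmetric] powr_powr)
    also have "\<dots> \<le> S powr 1" using S1 assms(2) p0 by (intro powr_mono) auto
    finally show ?thesis using S1 by simp
  qed
  have key: "P0 * S < polyform r n A y"
  proof -
    have tp: "t powr p = t ^ r * t powr (p - r)"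
      using t0 by (simp add: powr_add[symmetric] powr_realpow[symmetric])
    have "P0 * S \<le> P0 + P0 * real n * t powr p"
    proof -
      have "P0 * S \<le> P0 * (1 + real n * t powr p)" using S2 P0nn by (rule mult_left_mono)
      thus ?thesis by (simp add: algebra_simps)
    qed
    also have "P0 + P0 * real n * t powr p \<le> P0 + P0 * real n * t ^ r * (e / 2)"
    proof -
      have "P0 * real n * t powr p = (P0 * real n * t ^ r) * t powr (p - r)" using tp by simp
      also have "\<dots> \<le> (P0 * real n * t ^ r) * (e/2)" using tpe Pn t0 by (intro mult_left_mono) auto
      finally show ?thesis by simp
    qed
    also have "P0 + P0 * real n * t ^ r * (e / 2) < P0 + a * t ^ r"
    proof -
      have "P0 * real n * (e/2) < a"
      proof -
        have "P0 * real n * (e/2) = a * (P0 * real n) / (2 * (P0 * real n + 1))"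
          by (simp add: e_def mult_ac)
        also have "\<dots> < a" using a_pos Pn
          by (simp add: divide_less_eq)
        finally show ?thesis .
      qed
      thus ?thesis using t0 by (simp add: mult_ac)
    qed
    finally show ?thesis using Py by simp
  qed
  have "P0 < polyform r n A z"
  proof -
    have "P0 * c ^ r \<le> P0 * S" using cr P0nn by (simp add: mult_left_mono)
    hence "P0 * c ^ r < polyform r n A y" using key by simp
    thus ?thesis using Pz c0 by (simp add: pos_less_divide_eq)
  qed
  moreover have "polyform r n A z \<le> lambda_p r n p A"
    unfolding lambda_p_def using pz by (intro cSUP_upper bdd[OF p0]) auto
  ultimately show False using assms(8) P0_def by simp
qed

end
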